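(* For all $i,j,k\in\{1,\dots,\ell\}$, $$[F_i,M_{jk}]=\delta_{ij}M_{j+1,k}K_i^{-2}-\delta_{ik}K_i^2M_{j,k-1}-\delta_{ij}\delta_{ik}\tfrac{K_i^2-K_i^{-2}}{q-q^{-1}},$$ $$[E_i,M_{jk}^*]=\delta_{ik}M_{j,k-1}^*K_i^2-\delta_{ij}K_i^{-2}M_{j+1,k}^*+\delta_{ij}\delta_{ik}\tfrac{K_i^2-K_i^{-2}}{q-q^{-1}},$$ where $M_{jk}:=0$ whenever $j>k$.
   Context: Fix $0<q<1$, $\ell\ge1$. In $U_q(\mathfrak{su}(\ell+1))$ (generators $K_i^{\pm1},E_i,F_i=E_i^*$, $K_i=K_i^*$, $1\le i\le\ell$, with $[K_i,K_j]=0$, $K_iE_iK_i^{-1}=qE_i$, $K_iE_jK_i^{-1}=q^{-1/2}E_j$ if $|i-j|=1$, $=E_j$ if $|i-j|>1$, $[E_i,F_j]=\delta_{ij}\frac{K_i^2-K_i^{-2}}{q-q^{-1}}$, $E_i^2E_j-(q+q^{-1})E_iE_jE_i+E_jE_i^2=0$ for $|i-j|=1$, $[E_i,E_j]=0$ for $|i-j|>1$, plus adjoints) set $[a,b]_q:=ab-q^{-1}ba$, $M_{ii}:=E_i$ and $M_{jk}:=[E_j,M_{j+1,k}]_q$ for $j<k$. *)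

theory Defs
  imports Complex_Main
begin

definition qcomm :: "real \<Rightarrow> 'a::real_algebra_1 \<Rightarrow> 'a \<Rightarrow> 'a" where
  "qcomm q a b = a * b - (1 / q) *\<^sub>R (b * a)"

function Mq :: "(nat \<Rightarrow> 'a::real_algebra_1) \<Rightarrow> real \<Rightarrow> nat \<Rightarrow> nat \<Rightarrow> 'a" where
  "Mq E q j k = (if k < j then 0 else if j = k then E j
                 else qcomm q (E j) (Mq E q (Suc j) k))"
  by pat_completeness auto
termination by (relation "measure (\<lambda>(E, q, j, k). k - j)") auto

text \<open>Elements E_i, K_i, K_i^{-1} (1 \<le> i \<le> l) of a *-algebra over the reals (U_q as a real *-algebra) (with
  involution st) satisfying the defining relations of U_q(su(l+1)), with F_i = E_i^*.
  The adjoint relations follow from st being an involutive anti-homomorphism.\<close>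
definition Uq_su_rels ::
  "nat \<Rightarrow> real \<Rightarrow> ('a::real_algebra_1 \<Rightarrow> 'a) \<Rightarrow> (nat \<Rightarrow> 'a) \<Rightarrow> (nat \<Rightarrow> 'a) \<Rightarrow> (nat \<Rightarrow> 'a) \<Rightarrow> bool" where
  "Uq_su_rels l q st E K Kinv \<longleftrightarrow>
     (\<forall>x. st (st x) = x) \<and>
     (\<forall>x y. st (x + y) = st x + st y) \<and>
     (\<forall>x y. st (x * y) = st y * st x) \<and>
     (\<forall>c x. st (c *\<^sub>R x) = c *\<^sub>R st x) \<and>
     (\<forall>i\<in>{1..l}. st (K i) = K i) \<and>
     (\<forall>i\<in>{1..l}. K i * Kinv i = 1 \<and> Kinv i * K i = 1) \<and>
     (\<forall>i\<in>{1..l}. \<forall>j\<in>{1..l}. K i * K j = K j * K i) \<and>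
     (\<forall>i\<in>{1..l}. K i * E i * Kinv i = q *\<^sub>R E i) \<and>
     (\<forall>i\<in>{1..l}. \<forall>j\<in>{1..l}. (i = Suc j \<or> j = Suc i) \<longrightarrow>
          K i * E j * Kinv i = (q powr (-1/2)) *\<^sub>R E j) \<and>
     (\<forall>i\<in>{1..l}. \<forall>j\<in>{1..l}. (Suc i < j \<or> Suc j < i) \<longrightarrow>
          K i * E j * Kinv i = E j) \<and>
     (\<forall>i\<in>{1..l}. \<forall>j\<in>{1..l}.
          E i * st (E j) - st (E j) * E i =
          (if i = j then (1 / (q - 1/q)) *\<^sub>R (K i ^ 2 - Kinv i ^ 2) else 0)) \<and>
     (\<forall>i\<in>{1..l}. \<forall>j\<in>{1..l}. (i = Suc j \<or> j = Suc i) \<longrightarrow>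
          E i ^ 2 * E j - (q + 1/q) *\<^sub>R (E i * E j * E i) + E j * E i ^ 2 = 0) \<and>
     (\<forall>i\<in>{1..l}. \<forall>j\<in>{1..l}. (Suc i < j \<or> Suc j < i) \<longrightarrow>
          E i * E j = E j * E i)"

end

theory Submission imports Defs begin
declare Mq.simps[simp del]
lemma Mq_gt: "k < j \<Longrightarrow> Mq E q j k = 0" by (subst Mq.simps) simp
lemma Mq_eq: "Mq E q j j = E j" by (subst Mq.simps) simp
lemma Mq_lt: "j < k \<Longrightarrow> Mq E q j k = qcomm q (E j) (Mq E q (Suc j) k)" by (subst Mq.simps) simp

lemma comm_qcomm1:
  fixes F E M :: "'a::real_algebra_1"
  assumes "F*E = E*F"
  shows "F*qcomm q E M - qcomm q E M * F = qcomm q E (F*M - M*F)"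
proof -
  have "F*(E*M) = E*(F*M)" by (metis assms mult.assoc)
  then show ?thesis using assms by (simp add: qcomm_def algebra_simps)
qed

lemma comm_qcomm2:
  fixes F E M :: "'a::real_algebra_1"
  assumes "F*M = M*F"
  shows "F*qcomm q E M - qcomm q E M * F = (F*E - E*F)*M - (1/q) *\<^sub>R (M*(F*E - E*F))"
proof -
  have "F*(M*E) = M*(F*E)" by (metis assms mult.assoc)
  then show ?thesis using assms by (simp add: qcomm_def algebra_simps)
qed

lemma K_qcomm:
  fixes K x y :: "'a::real_algebra_1"
  assumes "K*x = a *\<^sub>R (x*K)" "K*y = b *\<^sub>R (y*K)"
  shows "K*qcomm q x y = (a*b) *\<^sub>R (qcomm q x y * K)"
proof -
  have 1: "K*(x*y) = (a*b) *\<^sub>R (x*y*K)"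
  proof -
    have "K*(x*y) = (K*x)*y" by (simp add: mult.assoc)
    also have "\<dots> = a *\<^sub>R (x*(K*y))" by (simp add: assms(1) mult.assoc)
    also have "\<dots> = (a*b) *\<^sub>R (x*y*K)" by (simp add: assms(2) mult.assoc)
    finally show ?thesis .
  qed
  have 2: "K*(y*x) = (a*b) *\<^sub>R (y*x*K)"
  proof -
    have "K*(y*x) = (K*y)*x" by (simp add: mult.assoc)
    also have "\<dots> = b *\<^sub>R (y*(K*x))" by (simp add: assms(2) mult.assoc)
    also have "\<dots> = (a*b) *\<^sub>R (y*x*K)" by (simp add: assms(1) mult.assoc)
    finally show ?thesis .
  qed
  have "K*qcomm q x y = K*(x*y) - (1/q) *\<^sub>R (K*(y*x))"
    by (simp add: qcomm_def right_diff_distrib)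
  also have "\<dots> = (a*b) *\<^sub>R (x*y*K) - ((1/q)*(a*b)) *\<^sub>R (y*x*K)" by (simp add: 1 2)
  also have "\<dots> = (a*b) *\<^sub>R (qcomm q x y * K)"
    by (simp add: qcomm_def left_diff_distrib scaleR_right_diff_distrib mult.commute)
  finally show ?thesis .
qed

lemma K_sq:
  fixes K x :: "'a::real_algebra_1"
  assumes "K*x = a *\<^sub>R (x*K)"
  shows "K^2*x = (a*a) *\<^sub>R (x*K^2)"
proof -
  have "K^2*x = K*(K*x)" by (simp add: power2_eq_square mult.assoc)
  also have "\<dots> = K*(a *\<^sub>R (x*K))" by (simp only: assms)
  also have "\<dots> = a *\<^sub>R ((K*x)*K)" by (simp only: mult_scaleR_right mult.assoc)
  also have "\<dots> = a *\<^sub>R ((a *\<^sub>R (x*K))*K)" by (simp only: assms)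
  also have "\<dots> = (a*a) *\<^sub>R (x*K^2)" by (simp add: mult.assoc power2_eq_square)
  finally show ?thesis .
qed

lemma Kinv_comm:
  fixes K Ki x :: "'a::real_algebra_1"
  assumes "K*x = a *\<^sub>R (x*K)" "K*Ki = 1" "Ki*K = 1" "a \<noteq> 0"
  shows "Ki*x = (1/a) *\<^sub>R (x*Ki)"
proof -
  have "x*Ki = Ki*(K*x)*Ki" by (metis assms(3) mult.assoc mult_1_left)
  also have "\<dots> = a *\<^sub>R (Ki*x)" by (simp add: assms(1) mult.assoc assms(2))
  finally have "x*Ki = a *\<^sub>R (Ki*x)" .
  then have "(1/a) *\<^sub>R (x*Ki) = ((1/a)*a) *\<^sub>R (Ki*x)" by simp
  then show ?thesis using assms(4) by simp
qed

definition kc :: "real \<Rightarrow> nat \<Rightarrow> nat \<Rightarrow> real" where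
  "kc q i m = (if m = i then q else if i = Suc m \<or> m = Suc i then q powr (-1/2) else 1)"

lemma kc_nz: "0 < q \<Longrightarrow> kc q i m \<noteq> 0" by (simp add: kc_def)

context
  fixes l q st E K Kinv
  assumes R: "Uq_su_rels l q st E K Kinv" and qpos: "0 < q"
begin

lemmas R_stst = R[unfolded Uq_su_rels_def, THEN conjunct1]
lemmas R_add = R[unfolded Uq_su_rels_def, THEN conjunct2, THEN conjunct1]
lemmas R_mult = R[unfolded Uq_su_rels_def, THEN conjunct2, THEN conjunct2, THEN conjunct1]
lemmas R_scale = R[unfolded Uq_su_rels_def, THEN conjunct2, THEN conjunct2, THEN conjunct2, THEN conjunct1]
lemmas R_stK = R[unfolded Uq_su_rels_def, THEN conjunct2, THEN conjunct2, THEN conjunct2, THEN conjunct2, THEN conjunct1]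
lemmas R_Kinv = R[unfolded Uq_su_rels_def, THEN conjunct2, THEN conjunct2, THEN conjunct2, THEN conjunct2, THEN conjunct2, THEN conjunct1]
lemmas R_Kcomm = R[unfolded Uq_su_rels_def, THEN conjunct2, THEN conjunct2, THEN conjunct2, THEN conjunct2, THEN conjunct2, THEN conjunct2, THEN conjunct1]
lemmas R_KEsame = R[unfolded Uq_su_rels_def, THEN conjunct2, THEN conjunct2, THEN conjunct2, THEN conjunct2, THEN conjunct2, THEN conjunct2, THEN conjunct2, THEN conjunct1]
lemmas R_KEadj = R[unfolded Uq_su_rels_def, THEN conjunct2, THEN conjunct2, THEN conjunct2, THEN conjunct2, THEN conjunct2, THEN conjunct2, THEN conjunct2, THEN conjunct2, THEN conjunct1]
lemmas R_KEfar = R[unfolded Uq_su_rels_def, THEN conjunct2, THEN conjunct2, THEN conjunct2, THEN conjunct2, THEN conjunct2, THEN conjunct2, THEN conjunct2, THEN conjunct2, THEN conjunct2, THEN conjunct1]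
lemmas R_EF = R[unfolded Uq_su_rels_def, THEN conjunct2, THEN conjunct2, THEN conjunct2, THEN conjunct2, THEN conjunct2, THEN conjunct2, THEN conjunct2, THEN conjunct2, THEN conjunct2, THEN conjunct2, THEN conjunct1]
lemmas R_serre = R[unfolded Uq_su_rels_def, THEN conjunct2, THEN conjunct2, THEN conjunct2, THEN conjunct2, THEN conjunct2, THEN conjunct2, THEN conjunct2, THEN conjunct2, THEN conjunct2, THEN conjunct2, THEN conjunct2, THEN conjunct1]
lemmas R_Efar = R[unfolded Uq_su_rels_def, THEN conjunct2, THEN conjunct2, THEN conjunct2, THEN conjunct2, THEN conjunct2, THEN conjunct2, THEN conjunct2, THEN conjunct2, THEN conjunct2, THEN conjunct2, THEN conjunct2, THEN conjunct2]

lemma KE: "i \<in> {1..l} \<Longrightarrow> m \<in> {1..l} \<Longrightarrow> K i * E m = kc q i m *\<^sub>R (E m * K i)"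
proof -
  assume i: "i \<in> {1..l}" and m: "m \<in> {1..l}"
  have inv: "Kinv i * K i = 1" using R_Kinv i by blast
  have c: "K i * E m * Kinv i = kc q i m *\<^sub>R E m"
  proof -
    have r1: "K i * E i * Kinv i = q *\<^sub>R E i" using R_KEsame i by blast
    have r2: "(i = Suc m \<or> m = Suc i) \<longrightarrow> K i * E m * Kinv i = (q powr (-1/2)) *\<^sub>R E m"
      using R_KEadj i m by blast
    have r3: "(Suc i < m \<or> Suc m < i) \<longrightarrow> K i * E m * Kinv i = E m"
      using R_KEfar i m by blast
    show ?thesis
    proof (cases "m = i")
      case True then show ?thesis using r1 by (simp add: kc_def)
    next
      case False
      show ?thesis
      proof (cases "i = Suc m \<or> m = Suc i")
        case True then show ?thesis using r2 False by (simp add: kc_def)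
      next
        case F2: False
        then have "Suc i < m \<or> Suc m < i" using False by linarith
        then show ?thesis using r3 False F2 by (simp add: kc_def)
      qed
    qed
  qed
  have "K i * E m = K i * E m * Kinv i * K i" by (simp add: mult.assoc inv)
  then show ?thesis by (simp add: c)
qed

lemma Kinv_ok: "i \<in> {1..l} \<Longrightarrow> K i * Kinv i = 1 \<and> Kinv i * K i = 1"
  using R_Kinv by blast

lemma FE: "i \<in> {1..l} \<Longrightarrow> m \<in> {1..l} \<Longrightarrow>
  st (E i) * E m - E m * st (E i) =
    (if i = m then - ((1 / (q - 1/q)) *\<^sub>R (K i ^ 2 - Kinv i ^ 2)) else 0)"
proof -
  assume i: "i \<in> {1..l}" and m: "m \<in> {1..l}"
  have "E m * st (E i) - st (E i) * E m =
          (if m = i then (1 / (q - 1/q)) *\<^sub>R (K m ^ 2 - Kinv m ^ 2) else 0)"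
    using R_EF i m by blast
  then show ?thesis by (auto simp: algebra_simps)
qed

lemma EE_far: "i \<in> {1..l} \<Longrightarrow> m \<in> {1..l} \<Longrightarrow> Suc i < m \<or> Suc m < i \<Longrightarrow> E i * E m = E m * E i"
  using R_Efar by blast

lemma KM: "1 \<le> a \<Longrightarrow> a \<le> k \<Longrightarrow> k \<le> l \<Longrightarrow> i \<in> {1..l} \<Longrightarrow>
   K i * Mq E q a k = (\<Prod>m=a..k. kc q i m) *\<^sub>R (Mq E q a k * K i)"
proof (induction "k - a" arbitrary: a)
  case 0
  then have "a = k" by simp
  then show ?case using KE[of i k] 0 by (simp add: Mq_eq)
next
  case (Suc d)
  then have ak: "a < k" by simp
  have IH: "K i * Mq E q (Suc a) k = (\<Prod>m=Suc a..k. kc q i m) *\<^sub>R (Mq E q (Suc a) k * K i)"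
    using Suc by simp
  have "K i * E a = kc q i a *\<^sub>R (E a * K i)" using KE[of i a] Suc by simp
  from K_qcomm[OF this IH, of q] show ?case
    using ak by (simp add: Mq_lt prod.atLeast_Suc_atMost)
qed

lemma xM: "(\<And>m. a \<le> m \<Longrightarrow> m \<le> k \<Longrightarrow> x * E m = E m * x) \<Longrightarrow>
   x * Mq E q a k = Mq E q a k * x"
proof (induction "k - a" arbitrary: a)
  case 0
  then show ?case by (cases "a = k") (auto simp: Mq_eq Mq_gt)
next
  case (Suc d)
  then have ak: "a < k" by simp
  have IH: "x * Mq E q (Suc a) k = Mq E q (Suc a) k * x" using Suc by simp
  have xa: "x * E a = E a * x" using Suc ak by simp
  have 1: "x*(E a * Mq E q (Suc a) k) = (E a * Mq E q (Suc a) k)*x"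
    by (metis IH xa mult.assoc)
  have 2: "x*(Mq E q (Suc a) k * E a) = (Mq E q (Suc a) k * E a)*x"
    by (metis IH xa mult.assoc)
  have "x * qcomm q (E a) (Mq E q (Suc a) k) = x*(E a * Mq E q (Suc a) k) - (1/q) *\<^sub>R (x*(Mq E q (Suc a) k * E a))"
    by (simp only: qcomm_def right_diff_distrib mult_scaleR_right)
  also have "\<dots> = (E a * Mq E q (Suc a) k)*x - (1/q) *\<^sub>R ((Mq E q (Suc a) k * E a)*x)"
    by (simp only: 1 2)
  also have "\<dots> = qcomm q (E a) (Mq E q (Suc a) k) * x"
    by (simp only: qcomm_def left_diff_distrib mult_scaleR_left)
  finally show ?case using ak by (simp add: Mq_lt)
qed


lemma pw: "q powr (-1/2) * q powr (-1/2) = 1/q"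
  using qpos by (simp add: powr_add[symmetric] powr_minus_divide)

lemma sq_rels:
  assumes i: "i \<in> {1..l}" and c: "K i * x = a *\<^sub>R (x * K i)" and a: "a * a = 1/q"
  shows "K i ^ 2 * x = (1/q) *\<^sub>R (x * K i ^ 2)" "Kinv i ^ 2 * x = q *\<^sub>R (x * Kinv i ^ 2)"
proof -
  show "K i ^ 2 * x = (1/q) *\<^sub>R (x * K i ^ 2)" using K_sq[OF c] a by simp
  have "a \<noteq> 0" using a qpos by auto
  then have "Kinv i * x = (1/a) *\<^sub>R (x * Kinv i)" using Kinv_comm[OF c] Kinv_ok[OF i] by blast
  from K_sq[OF this] show "Kinv i ^ 2 * x = q *\<^sub>R (x * Kinv i ^ 2)" using a qpos
    by (simp add: field_simps)
qed


lemma part1: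
  assumes q1: "q < 1"
  shows "i \<in> {1..l} \<Longrightarrow> j \<in> {1..l} \<Longrightarrow> k \<in> {1..l} \<Longrightarrow> j \<le> k \<Longrightarrow>
   st (E i) * Mq E q j k - Mq E q j k * st (E i) =
           (if i = j then Mq E q (Suc j) k * Kinv i ^ 2 else 0)
         - (if i = k then K i ^ 2 * Mq E q j (k - 1) else 0)
         - (if i = j \<and> i = k then (1 / (q - 1/q)) *\<^sub>R (K i ^ 2 - Kinv i ^ 2) else 0)"
proof (induction "k - j" arbitrary: j i)
  case 0
  then have "j = k" by simp
  then show ?case using 0 FE[of i k] by (simp add: Mq_eq Mq_gt)
next
  case (Suc d)
  then have jk: "j < k" and j1: "Suc j \<in> {1..l}" by auto
  have IH: "\<And>i'. i' \<in> {1..l} \<Longrightarrow> st (E i') * Mq E q (Suc j) k - Mq E q (Suc j) k * st (E i') =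
           (if i' = Suc j then Mq E q (Suc (Suc j)) k * Kinv i' ^ 2 else 0)
         - (if i' = k then K i' ^ 2 * Mq E q (Suc j) (k - 1) else 0)
         - (if i' = Suc j \<and> i' = k then (1 / (q - 1/q)) *\<^sub>R (K i' ^ 2 - Kinv i' ^ 2) else 0)"
    using Suc j1 jk by simp
  define M' where "M' = Mq E q (Suc j) k"
  define h where "h = (1 / (q - 1/q)) *\<^sub>R (K i ^ 2 - Kinv i ^ 2)"
  have Mjk: "Mq E q j k = qcomm q (E j) M'" using jk by (simp add: Mq_lt M'_def)
  show ?case
  proof (cases "i = j")
    case True
    have FM: "st (E i) * M' = M' * st (E i)" using IH[OF Suc(3)] True jk M'_def by simp
    have FEj: "st (E i) * E j - E j * st (E i) = - h" using FE[of i j] True Suc h_def by simp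
    have pr: "(\<Prod>m=Suc j..k. kc q i m) = q powr (-1/2)"
    proof -
      have "(\<Prod>m=Suc (Suc j)..k. kc q i m) = 1"
        by (rule prod.neutral) (auto simp: kc_def True)
      then show ?thesis using jk by (simp add: prod.atLeast_Suc_atMost kc_def True)
    qed
    have KM': "K i * M' = q powr (-1/2) *\<^sub>R (M' * K i)"
      using KM[of "Suc j" k i] jk Suc pr M'_def by simp
    note S = sq_rels[OF Suc(3) KM' pw]
    have "st (E i) * Mq E q j k - Mq E q j k * st (E i) = (- h) * M' - (1/q) *\<^sub>R (M' * (- h))"
      unfolding Mjk comm_qcomm2[OF FM] FEj ..
    also have "\<dots> = M' * Kinv i ^ 2"
    proof -
      define c where "c = 1 / (q - 1/q)"
      have qq: "q*q < 1" using mult_strict_mono[of q 1 q 1] qpos q1 by simp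
      have c1: "c * (q - 1/q) = 1" using qpos qq unfolding c_def by (simp add: field_simps)
      have hM: "h * M' = c *\<^sub>R ((1/q) *\<^sub>R (M' * K i ^ 2) - q *\<^sub>R (M' * Kinv i ^ 2))"
        unfolding h_def c_def by (simp add: left_diff_distrib S)
      have Mh: "M' * h = c *\<^sub>R (M' * K i ^ 2 - M' * Kinv i ^ 2)"
        unfolding h_def c_def by (simp add: right_diff_distrib)
      have "(- h) * M' - (1/q) *\<^sub>R (M' * (- h)) = (c * (q - 1/q)) *\<^sub>R (M' * Kinv i ^ 2)"
        by (simp add: hM Mh scaleR_right_diff_distrib scaleR_left_diff_distrib algebra_simps)
      then show ?thesis using c1 by simp
    qed
    finally show ?thesis using True jk M'_def by simp
  next
    case False
    have FEj: "st (E i) * E j = E j * st (E i)" using FE[of i j] False Suc by simp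
    define X where "X = st (E i) * M' - M' * st (E i)"
    have main: "st (E i) * Mq E q j k - Mq E q j k * st (E i) = qcomm q (E j) X"
      unfolding Mjk X_def by (rule comm_qcomm1[OF FEj])
    have X: "X = (if i = Suc j then Mq E q (Suc (Suc j)) k * Kinv i ^ 2 else 0)
         - (if i = k then K i ^ 2 * Mq E q (Suc j) (k - 1) else 0)
         - (if i = Suc j \<and> i = k then h else 0)"
      unfolding X_def M'_def h_def by (rule IH[OF Suc(3)])
    have c1: "c * (q - 1/q) = 1" if "c = 1 / (q - 1/q)" for c
    proof -
      have qq: "q*q < 1" using mult_strict_mono[of q 1 q 1] qpos q1 by simp
      show ?thesis using qpos qq that by (simp add: field_simps)
    qed
    show ?thesis
    proof (cases "i = k")
      case ik: True
      show ?thesis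
      proof (cases "Suc j = k")
        case True
        have X': "X = - h" using X ik True by (simp add: Mq_gt)
        have kc: "kc q i j = q powr (-1/2)" using ik True by (simp add: kc_def)
        have KEj: "K i * E j = q powr (-1/2) *\<^sub>R (E j * K i)" using KE[of i j] Suc kc by simp
        note S = sq_rels[OF Suc(3) KEj pw]
        define c where "c = 1 / (q - 1/q)"
        have e: "c*q - c/q = 1" using c1[OF c_def] by (simp add: right_diff_distrib)
        have "c * (1/q^2) - c = - ((c*q - c/q)/q)" using qpos
          by (simp add: field_simps power2_eq_square)
        then have cc: "c * (1/q^2) - c = - (1/q)" using e by simp
        have hE: "h * E j = c *\<^sub>R ((1/q) *\<^sub>R (E j * K i ^ 2) - q *\<^sub>R (E j * Kinv i ^ 2))"
          unfolding h_def c_def by (simp add: left_diff_distrib S)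
        have Eh: "E j * h = c *\<^sub>R (E j * K i ^ 2 - E j * Kinv i ^ 2)"
          unfolding h_def c_def by (simp add: right_diff_distrib)
        have "qcomm q (E j) X = (c * (1/q^2) - c) *\<^sub>R (E j * K i ^ 2)"
          unfolding X' qcomm_def using qpos
          by (simp add: hE Eh scaleR_right_diff_distrib scaleR_left_diff_distrib algebra_simps power2_eq_square)
        also have "\<dots> = - (K i ^ 2 * E j)" using cc S by simp
        moreover have "k - 1 = j" using True by simp
        ultimately show ?thesis using main ik True False by (simp add: Mq_eq)
      next
        case False2: False
        then have jk2: "Suc j < k" using jk by simp
        have X': "X = - (K i ^ 2 * Mq E q (Suc j) (k - 1))" using X ik False2 by simp
        have kc: "kc q i j = 1" using ik jk2 by (simp add: kc_def)
        have KEj: "K i * E j = 1 *\<^sub>R (E j * K i)" using KE[of i j] Suc kc by simp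
        have K2: "K i ^ 2 * E j = E j * K i ^ 2" using K_sq[OF KEj] by simp
        have K2': "E j * (K i ^ 2 * y) = K i ^ 2 * (E j * y)" for y
          by (metis K2 mult.assoc)
        have "qcomm q (E j) X = - (K i ^ 2 * qcomm q (E j) (Mq E q (Suc j) (k - 1)))"
          unfolding X' qcomm_def by (simp add: K2' right_diff_distrib mult.assoc)
        also have "\<dots> = - (K i ^ 2 * Mq E q j (k - 1))" using jk2 by (simp add: Mq_lt)
        finally show ?thesis using main ik False by simp
      qed
    next
      case nik: False
      show ?thesis
      proof (cases "i = Suc j")
        case True
        define M2 where "M2 = Mq E q (Suc (Suc j)) k"
        have X': "X = M2 * Kinv i ^ 2" using X nik True M2_def by simp
        have kc: "kc q i j = q powr (-1/2)" using True by (simp add: kc_def)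
        have KEj: "K i * E j = q powr (-1/2) *\<^sub>R (E j * K i)" using KE[of i j] Suc kc by simp
        note S = sq_rels[OF Suc(3) KEj pw]
        have EM2: "E j * M2 = M2 * E j" unfolding M2_def
          by (rule xM) (use Suc in \<open>auto intro!: EE_far\<close>)
        have "qcomm q (E j) X = E j * M2 * Kinv i ^ 2 - (1/q) *\<^sub>R (M2 * (Kinv i ^ 2 * E j))"
          unfolding X' qcomm_def by (simp add: mult.assoc)
        also have "\<dots> = 0" using qpos by (simp add: S EM2 mult.assoc)
        finally show ?thesis using main nik False by simp
      next
        case False2: False
        have "X = 0" using X nik False2 by simp
        then show ?thesis using main nik False by (simp add: qcomm_def)
      qed
    qed
  qed
qed

lemma st_add: "st (x + y) = st x + st y" using R_add by blast
lemma st_mult: "st (x * y) = st y * st x" using R_mult by blast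
lemma st_st: "st (st x) = x" using R_stst by blast
lemma st_scale: "st (c *\<^sub>R x) = c *\<^sub>R st x" using R_scale by blast
lemma st_diff: "st (x - y) = st x - st y"
proof -
  have "st x = st ((x - y) + y)" by simp
  then show ?thesis by (simp only: st_add) simp
qed
lemma st_0: "st 0 = 0" using st_diff[of 0 0] by simp
lemma st_1: "st 1 = (1::'a)"
proof -
  have "st (st 1 * 1) = st 1 * st (st 1)" by (rule st_mult)
  then show ?thesis by (simp add: st_st)
qed
lemma st_K: "i \<in> {1..l} \<Longrightarrow> st (K i) = K i" using R_stK by blast
lemma st_Kinv: "i \<in> {1..l} \<Longrightarrow> st (Kinv i) = Kinv i"
proof -
  assume i: "i \<in> {1..l}"
  have "st (K i * Kinv i) = 1" using Kinv_ok[OF i] st_1 by simp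
  then have a: "st (Kinv i) * K i = 1" by (simp add: st_mult st_K[OF i])
  have "st (Kinv i) = st (Kinv i) * (K i * Kinv i)" using Kinv_ok[OF i] by simp
  also have "\<dots> = Kinv i" by (simp add: mult.assoc[symmetric] a)
  finally show ?thesis .
qed
lemma st_pow2: "st (x ^ 2) = st x ^ 2" by (simp add: power2_eq_square st_mult)
lemma st_uminus: "st (- x) = - st x" using st_diff[of 0 x] st_0 by simp

end

theorem lemma3p1:
  fixes l :: nat and q :: real and st :: "'a::real_algebra_1 \<Rightarrow> 'a"
    and E K Kinv :: "nat \<Rightarrow> 'a"
  assumes "0 < q" and "q < 1" and "1 \<le> l"
    and "Uq_su_rels l q st E K Kinv"
    and "i \<in> {1..l}" and "j \<in> {1..l}" and "k \<in> {1..l}"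
  shows "(st (E i) * Mq E q j k - Mq E q j k * st (E i) =
           (if i = j then Mq E q (Suc j) k * Kinv i ^ 2 else 0)
         - (if i = k then K i ^ 2 * Mq E q j (k - 1) else 0)
         - (if i = j \<and> i = k then (1 / (q - 1/q)) *\<^sub>R (K i ^ 2 - Kinv i ^ 2) else 0)) \<and>
         (E i * st (Mq E q j k) - st (Mq E q j k) * E i =
           (if i = k then st (Mq E q j (k - 1)) * K i ^ 2 else 0)
         - (if i = j then Kinv i ^ 2 * st (Mq E q (Suc j) k) else 0)
         + (if i = j \<and> i = k then (1 / (q - 1/q)) *\<^sub>R (K i ^ 2 - Kinv i ^ 2) else 0))"
proof -
  note R = assms(4) and qpos = assms(1)
  have P1: "st (E i) * Mq E q j k - Mq E q j k * st (E i) =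
           (if i = j then Mq E q (Suc j) k * Kinv i ^ 2 else 0)
         - (if i = k then K i ^ 2 * Mq E q j (k - 1) else 0)
         - (if i = j \<and> i = k then (1 / (q - 1/q)) *\<^sub>R (K i ^ 2 - Kinv i ^ 2) else 0)"
  proof (cases "j \<le> k")
    case True
    then show ?thesis using part1[OF R qpos assms(2) assms(5,6,7)] by blast
  next
    case False
    then show ?thesis by (simp add: Mq_gt)
  qed
  have "st (st (E i) * Mq E q j k - Mq E q j k * st (E i)) =
        st (Mq E q j k) * E i - E i * st (Mq E q j k)"
    by (simp add: st_diff[OF R qpos] st_mult[OF R qpos] st_st[OF R qpos])
  then have "E i * st (Mq E q j k) - st (Mq E q j k) * E i =
       - st ((if i = j then Mq E q (Suc j) k * Kinv i ^ 2 else 0)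
         - (if i = k then K i ^ 2 * Mq E q j (k - 1) else 0)
         - (if i = j \<and> i = k then (1 / (q - 1/q)) *\<^sub>R (K i ^ 2 - Kinv i ^ 2) else 0))"
    unfolding P1 by (simp add: algebra_simps)
  also have "\<dots> = (if i = k then st (Mq E q j (k - 1)) * K i ^ 2 else 0)
         - (if i = j then Kinv i ^ 2 * st (Mq E q (Suc j) k) else 0)
         + (if i = j \<and> i = k then (1 / (q - 1/q)) *\<^sub>R (K i ^ 2 - Kinv i ^ 2) else 0)"
    using assms(5)
    by (simp add: st_diff[OF R qpos] st_mult[OF R qpos] st_0[OF R qpos] st_scale[OF R qpos]
        st_pow2[OF R qpos] st_K[OF R qpos] st_Kinv[OF R qpos] st_add[OF R qpos] st_uminus[OF R qpos] algebra_simps)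
  finally show ?thesis using P1 by blast
qed

end
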